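(* Let $T$ be RC-viable with respect to $S$. Then one of the following holds: (i) there is an edge $(u,v)$ of $T_{H(S)}$, with $v$ the parent of $u$, that satisfies the reaching criterion; or (ii) $T$ is recursively self-sufficient; in particular $V$ can be partitioned into subtrees $Q_s$, $s\in S$, with $s\in Q_s$ and $f(Q_s,s)\le\mathcal{T}$.
   Context: Let $T_{\mathrm{in}}=(V_{\mathrm{in}},E_{\mathrm{in}})$ be a finite tree; subtrees are identified with their vertex sets. $f:2^{V_{\mathrm{in}}}\times V_{\mathrm{in}}\to[0,+\infty]$ is minmax monotone: (1) $f(\{s\},s)=0$, and $f(U,s)=+\infty$ if $U$ is not a subtree or $s\notin U$; (2) $s\in U_1\subseteq U_2\Rightarrow f(U_1,s)\le f(U_2,s)$; (3) if $U$ is a subtree, $s\notin U$, and $s$ is adjacent to $u\in U$, then $f(U\cup\{s\},s)\ge f(U,u)$; (4) if $U$ is a subtree, $s\in U$, and $U_1,\dots,U_t$ are the vertex sets of the components of the tree induced by $U$ minus $s$, then $f(U,s)=\max_i f(U_i\cup\{s\},s)$. Fix $\mathcal{T}\ge0$. $T=(V,E)$ is a subtree of $T_{\mathrm{in}}$ and $S\subseteq V$ a set of leaves of $T$ with $|S|\ge2$, $|V|>2$. For an edge $(u,v)$, $T_{-v}(u)$ is the component of $T-v$ containing $u$, with vertex set $V_{-v}(u)$. Hub tree: $V_{H(S)}$ is the union of the vertex sets of the paths in $T$ between all pairs of sinks in $S$; $T_{H(S)}$ is the subtree induced by $V_{H(S)}$, and $T$ is rooted at a non-sink vertex $r\in V_{H(S)}$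 such that at least two of the components of $T-r$ contain sinks; for $w\in V$, $T(w)=(V(w),E(w))$ is the subtree consisting of $w$ and its descendants (so $T(r)=T$). If $w\in V_{H(S)}$ and $\eta\notin V_{H(S)}$ is a neighbour of $w$, then $T_{-w}(\eta)$ is an outstanding branch attached to $w$. $T$ is RC-viable with respect to $S$ if for every outstanding branch with vertex set $V'$ attached to $w\in V_{H(S)}$, $f(V'\cup\{w\},w)\le\mathcal{T}$. $\mathrm{BP}(a,a)$, for $a\in V_{H(S)}$, is $a$ together with the vertices of all outstanding branches attached to $a$. A subtree $T'$ with vertex set $V'$ is self-sufficient if $V'$ can be partitioned into subtrees $Q_s$, $s\in S\cap V'$, with $s\in Q_s$ and $f(Q_s,s)\le\mathcal{T}$. $T(v)$ ($v\in V_{H(S)}$) is recursively self-sufficient if $T(w)$ is self-sufficient for every $w\in V_{H(S)}\cap V(v)$; $T$ is recursively self-sufficient if $T(r)$ is. The ordered pair $(u,v)\in V_{H(S)}\times V_{H(S)}$ satisfies the reaching criterion if $v$ is the parent of $u$ in $T_{H(S)}$, $T_{-v}(u)$ is self-sufficient, and the subtree induced by $\mathrm{BP}(v,v)\cup V_{-v}(u)$ is not self-sufficient. *)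

theory Defs
  imports "HOL-Library.Extended_Nonnegative_Real"
begin

definition connected_in :: "('v \<times> 'v) set \<Rightarrow> 'v set \<Rightarrow> bool" where
  "connected_in E W \<longleftrightarrow> (\<forall>x\<in>W. \<forall>y\<in>W. (x, y) \<in> (E \<inter> W \<times> W)\<^sup>*)"

definition is_tree :: "'v set \<Rightarrow> ('v \<times> 'v) set \<Rightarrow> bool" where
  "is_tree V E \<longleftrightarrow> finite V \<and> V \<noteq> {} \<and> E \<subseteq> V \<times> V \<and> sym E \<and> (\<forall>x. (x, x) \<notin> E)
     \<and> connected_in E V
     \<and> (\<forall>x y. (x, y) \<in> E \<longrightarrow> (x, y) \<notin> (E - {(x, y), (y, x)})\<^sup>*)"

text \<open>Subtrees of the input tree are identified with their vertex sets: nonempty vertex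
  sets inducing a connected subgraph.\<close>
definition is_subtree :: "'v set \<Rightarrow> ('v \<times> 'v) set \<Rightarrow> 'v set \<Rightarrow> bool" where
  "is_subtree Vin Ein U \<longleftrightarrow> U \<noteq> {} \<and> U \<subseteq> Vin \<and> connected_in Ein U"

definition comp_of :: "('v \<times> 'v) set \<Rightarrow> 'v set \<Rightarrow> 'v \<Rightarrow> 'v set" where
  "comp_of E W x = {y \<in> W. (x, y) \<in> (E \<inter> W \<times> W)\<^sup>*}"

definition components :: "('v \<times> 'v) set \<Rightarrow> 'v set \<Rightarrow> 'v set set" where
  "components E W = (comp_of E W) ` W"

definition is_path :: "'v set \<Rightarrow> ('v \<times> 'v) set \<Rightarrow> 'v list \<Rightarrow> 'v \<Rightarrow> 'v \<Rightarrow> bool" where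
  "is_path V E p a b \<longleftrightarrow> p \<noteq> [] \<and> hd p = a \<and> last p = b \<and> distinct p \<and> set p \<subseteq> V
     \<and> successively (\<lambda>x y. (x, y) \<in> E) p"

definition minmax_monotone ::
  "'v set \<Rightarrow> ('v \<times> 'v) set \<Rightarrow> ('v set \<Rightarrow> 'v \<Rightarrow> ennreal) \<Rightarrow> bool" where
  "minmax_monotone Vin Ein f \<longleftrightarrow>
     (\<forall>s\<in>Vin. f {s} s = 0)
   \<and> (\<forall>U. \<forall>s\<in>Vin. U \<subseteq> Vin \<longrightarrow> (\<not> is_subtree Vin Ein U \<or> s \<notin> U) \<longrightarrow> f U s = \<infinity>)
   \<and> (\<forall>U1 U2 s. U2 \<subseteq> Vin \<longrightarrow> is_subtree Vin Ein U1 \<longrightarrow> s \<in> U1 \<longrightarrow> U1 \<subseteq> U2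
        \<longrightarrow> f U1 s \<le> f U2 s)
   \<and> (\<forall>U s u. is_subtree Vin Ein U \<longrightarrow> s \<in> Vin \<longrightarrow> s \<notin> U \<longrightarrow> u \<in> U \<longrightarrow> (s, u) \<in> Ein
        \<longrightarrow> f (U \<union> {s}) s \<ge> f U u)
   \<and> (\<forall>U s. is_subtree Vin Ein U \<longrightarrow> s \<in> U
        \<longrightarrow> f U s = (SUP C \<in> components Ein (U - {s}). f (C \<union> {s}) s))"

definition is_leaf :: "('v \<times> 'v) set \<Rightarrow> 'v set \<Rightarrow> 'v \<Rightarrow> bool" where
  "is_leaf Ein V s \<longleftrightarrow> s \<in> V \<and> card {w \<in> V. (s, w) \<in> Ein} = 1"

definition hub :: "('v \<times> 'v) set \<Rightarrow> 'v set \<Rightarrow> 'v set \<Rightarrow> 'v set" where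
  "hub Ein V S = {x. \<exists>s\<in>S. \<exists>s'\<in>S. \<exists>p. is_path V Ein p s s' \<and> x \<in> set p}"

text \<open>Vertex set of T(w) when T is rooted at r: w and its descendants.\<close>
definition desc :: "('v \<times> 'v) set \<Rightarrow> 'v set \<Rightarrow> 'v \<Rightarrow> 'v \<Rightarrow> 'v set" where
  "desc Ein V r w = {x \<in> V. \<exists>p. is_path V Ein p r x \<and> w \<in> set p}"

definition is_parent :: "('v \<times> 'v) set \<Rightarrow> 'v set \<Rightarrow> 'v \<Rightarrow> 'v \<Rightarrow> 'v \<Rightarrow> bool" where
  "is_parent Ein V r u v \<longleftrightarrow> u \<in> V \<and> v \<in> V \<and> (u, v) \<in> Ein \<and> u \<in> desc Ein V r v"

definition valid_root :: "('v \<times> 'v) set \<Rightarrow> 'v set \<Rightarrow> 'v set \<Rightarrow> 'v \<Rightarrow> bool" where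
  "valid_root Ein V S r \<longleftrightarrow> r \<in> hub Ein V S \<and> r \<notin> S
     \<and> (\<exists>C1\<in>components Ein (V - {r}). \<exists>C2\<in>components Ein (V - {r}).
          C1 \<noteq> C2 \<and> C1 \<inter> S \<noteq> {} \<and> C2 \<inter> S \<noteq> {})"

definition RC_viable ::
  "('v \<times> 'v) set \<Rightarrow> ('v set \<Rightarrow> 'v \<Rightarrow> ennreal) \<Rightarrow> real \<Rightarrow> 'v set \<Rightarrow> 'v set \<Rightarrow> bool" where
  "RC_viable Ein f \<T> V S \<longleftrightarrow>
     (\<forall>w\<in>hub Ein V S. \<forall>\<eta>\<in>V. (w, \<eta>) \<in> Ein \<longrightarrow> \<eta> \<notin> hub Ein V S
        \<longrightarrow> f (comp_of Ein (V - {w}) \<eta> \<union> {w}) w \<le> ennreal \<T>)"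

definition BP :: "('v \<times> 'v) set \<Rightarrow> 'v set \<Rightarrow> 'v set \<Rightarrow> 'v \<Rightarrow> 'v set" where
  "BP Ein V S a = {a} \<union> \<Union> {comp_of Ein (V - {a}) \<eta> | \<eta>. \<eta> \<in> V \<and> (a, \<eta>) \<in> Ein \<and> \<eta> \<notin> hub Ein V S}"

definition self_sufficient ::
  "'v set \<Rightarrow> ('v \<times> 'v) set \<Rightarrow> ('v set \<Rightarrow> 'v \<Rightarrow> ennreal) \<Rightarrow> real \<Rightarrow> 'v set \<Rightarrow> 'v set \<Rightarrow> bool" where
  "self_sufficient Vin Ein f \<T> S V' \<longleftrightarrow>
     (\<exists>Q :: 'v \<Rightarrow> 'v set.
        (\<forall>s\<in>S \<inter> V'. is_subtree Vin Ein (Q s) \<and> s \<in> Q s \<and> f (Q s) s \<le> ennreal \<T>)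
      \<and> (\<Union>s\<in>S \<inter> V'. Q s) = V'
      \<and> (\<forall>s\<in>S \<inter> V'. \<forall>s'\<in>S \<inter> V'. s \<noteq> s' \<longrightarrow> Q s \<inter> Q s' = {}))"

definition rec_self_sufficient ::
  "'v set \<Rightarrow> ('v \<times> 'v) set \<Rightarrow> ('v set \<Rightarrow> 'v \<Rightarrow> ennreal) \<Rightarrow> real \<Rightarrow> 'v set \<Rightarrow> 'v set
     \<Rightarrow> 'v \<Rightarrow> 'v \<Rightarrow> bool" where
  "rec_self_sufficient Vin Ein f \<T> V S r v \<longleftrightarrow>
     (\<forall>w \<in> hub Ein V S \<inter> desc Ein V r v. self_sufficient Vin Ein f \<T> S (desc Ein V r w))"

definition reaching_criterion ::
  "'v set \<Rightarrow> ('v \<times> 'v) set \<Rightarrow> ('v set \<Rightarrow> 'v \<Rightarrow> ennreal) \<Rightarrow> real \<Rightarrow> 'v set \<Rightarrow> 'v set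
     \<Rightarrow> 'v \<Rightarrow> 'v \<Rightarrow> 'v \<Rightarrow> bool" where
  "reaching_criterion Vin Ein f \<T> V S r u v \<longleftrightarrow>
     u \<in> hub Ein V S \<and> v \<in> hub Ein V S \<and> is_parent Ein V r u v
     \<and> self_sufficient Vin Ein f \<T> S (comp_of Ein (V - {v}) u)
     \<and> \<not> self_sufficient Vin Ein f \<T> S (BP Ein V S v \<union> comp_of Ein (V - {v}) u)"

end

theory Submission
  imports Defs
begin


abbreviation rch :: "('v \<times> 'v) set \<Rightarrow> 'v set \<Rightarrow> 'v \<Rightarrow> 'v \<Rightarrow> bool" where
  "rch E W a b \<equiv> (a, b) \<in> (E \<inter> W \<times> W)\<^sup>*"

lemma walk_rch:
  assumes "successively (\<lambda>x y. (x, y) \<in> E) p" "p \<noteq> []" "set p \<subseteq> W"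
  shows "rch E W (hd p) (last p)"
  using assms
proof (induction p)
  case Nil then show ?case by simp
next
  case (Cons x xs)
  show ?case
  proof (cases xs)
    case Nil then show ?thesis by simp
  next
    case (Cons y ys)
    have "rch E W y (last xs)" using Cons.IH Cons.prems Cons by (auto simp: successively_Cons)
    moreover have "(x, y) \<in> E \<inter> W \<times> W" using Cons.prems Cons by auto
    ultimately show ?thesis using Cons by (auto intro: converse_rtrancl_into_rtrancl)
  qed
qed

lemma path_rch: "is_path W E p a b \<Longrightarrow> set p \<subseteq> W' \<Longrightarrow> rch E W' a b"
  unfolding is_path_def using walk_rch[of E p W'] by auto

lemma path_exists:
  assumes "rch E W a b" "a \<in> W"
  shows "\<exists>p. is_path W E p a b"
  using assms(1)
proof (induction rule: rtrancl_induct)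
  case base then show ?case using assms(2) by (intro exI[of _ "[a]"]) (auto simp: is_path_def)
next
  case (step y z)
  then obtain p where p: "is_path W E p a y" by blast
  show ?case
  proof (cases "z \<in> set p")
    case True
    then obtain xs ys where xs: "p = xs @ z # ys" by (meson split_list)
    have "is_path W E (xs @ [z]) a z"
      using p xs unfolding is_path_def
      by (cases "xs = []") (auto simp: successively_append_iff)
    then show ?thesis by blast
  next
    case False
    have "is_path W E (p @ [z]) a z"
      using p step(2) False unfolding is_path_def
      by (auto simp: successively_append_iff)
    then show ?thesis by blast
  qed
qed

lemma rch_sym:
  assumes "sym E" "rch E W a b" shows "rch E W b a"
proof -
  have "sym (E \<inter> W \<times> W)" using assms(1) by (auto simp: sym_def)
  then show ?thesis using assms(2) by (meson sym_rtrancl symD)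
qed

lemma walk_avoid:
  assumes "successively (\<lambda>x y. (x, y) \<in> E) p" "p \<noteq> []" "set p \<subseteq> W" "sym E"
  shows "rch E W (last p) (hd p)"
  using rch_sym[OF assms(4) walk_rch[OF assms(1-3)]] .

lemma acyclic_path:
  assumes tree: "is_tree Vin E" and W: "W \<subseteq> Vin"
    and p: "is_path W E p a b" and y: "y \<in> set p" "y \<noteq> a" "y \<noteq> b"
  shows "\<not> rch E (W - {y}) a b"
proof
  assume ab: "rch E (W - {y}) a b"
  have symE: "sym E" using tree by (simp add: is_tree_def)
  obtain xs ys where p_eq: "p = xs @ y # ys" using y(1) by (meson split_list)
  have xs: "xs \<noteq> []" using p p_eq y(2) by (auto simp: is_path_def)
  have ys: "ys \<noteq> []" using p p_eq y(3) by (auto simp: is_path_def)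
  define c where "c = last xs"
  define d where "d = hd ys"
  have dist: "distinct p" "set p \<subseteq> W" using p by (auto simp: is_path_def)
  have succ: "successively (\<lambda>x y. (x, y) \<in> E) xs" "successively (\<lambda>x y. (x, y) \<in> E) ys"
    "(c, y) \<in> E" "(y, d) \<in> E"
    using p p_eq xs ys unfolding is_path_def c_def d_def
    by (auto simp: successively_append_iff successively_Cons)
  have xsW: "set xs \<subseteq> W - {y}" and ysW: "set ys \<subseteq> W - {y}" using dist p_eq by auto
  have cin: "c \<in> set xs" "d \<in> set ys" using xs ys unfolding c_def d_def by auto
  have "set xs \<inter> set ys = {}" using dist(1) p_eq by auto
  then have cd: "c \<noteq> d" using cin by blast
  have hdxs: "hd xs = a" using p p_eq xs by (auto simp: is_path_def)
  have lastys: "last ys = b" using p p_eq ys by (auto simp: is_path_def)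
  have c_a: "rch E (W - {y}) c a" using walk_avoid[OF succ(1) xs xsW symE] hdxs c_def by simp
  have b_d: "rch E (W - {y}) b d" using walk_avoid[OF succ(2) ys ysW symE] lastys d_def by simp
  define E' where "E' = E - {(c, y), (y, c)}"
  have sub: "E \<inter> (W - {y}) \<times> (W - {y}) \<subseteq> E'" unfolding E'_def by auto
  have "(c, d) \<in> (E \<inter> (W - {y}) \<times> (W - {y}))\<^sup>*" using c_a ab b_d by (meson rtrancl_trans)
  then have "(c, d) \<in> E'\<^sup>*" using rtrancl_mono[OF sub] by blast
  moreover have "(d, y) \<in> E'" using succ(4) symE cd unfolding E'_def by (auto simp: sym_def)
  ultimately have "(c, y) \<in> E'\<^sup>*" by (meson rtrancl.rtrancl_into_rtrancl)
  then show False using tree succ(3) unfolding is_tree_def E'_def by blast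
qed

lemma seg_suffix:
  assumes p: "is_path W E p a b" and y: "y \<in> set p" "y \<noteq> a"
  shows "rch E (W - {a}) y b"
proof -
  obtain xs ys where p_eq: "p = xs @ y # ys" using y(1) by (meson split_list)
  have xs: "xs \<noteq> []" using p p_eq y(2) by (auto simp: is_path_def)
  have "a \<in> set xs" using p p_eq xs by (auto simp: is_path_def)
  then have "set (y # ys) \<subseteq> W - {a}" using p p_eq by (auto simp: is_path_def)
  moreover have "successively (\<lambda>x y. (x, y) \<in> E) (y # ys)" using p p_eq
    by (auto simp: is_path_def successively_append_iff)
  moreover have "last (y # ys) = b" using p p_eq by (auto simp: is_path_def)
  ultimately show ?thesis using walk_rch[of E "y # ys" "W - {a}"] by auto
qed

lemma seg_prefix:
  assumes p: "is_path W E p a b" and y: "y \<in> set p" "y \<noteq> b"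
  shows "rch E (W - {b}) a y"
proof -
  obtain xs ys where p_eq: "p = xs @ y # ys" using y(1) by (meson split_list)
  have ys: "ys \<noteq> []" using p p_eq y(2) by (auto simp: is_path_def)
  have "b \<in> set ys" using p p_eq ys by (auto simp: is_path_def)
  then have "set (xs @ [y]) \<subseteq> W - {b}" using p p_eq by (auto simp: is_path_def)
  moreover have "successively (\<lambda>x y. (x, y) \<in> E) (xs @ [y])" using p p_eq
    by (auto simp: is_path_def successively_append_iff)
  moreover have "hd (xs @ [y]) = a" using p p_eq by (cases xs) (auto simp: is_path_def)
  ultimately show ?thesis using walk_rch[of E "xs @ [y]" "W - {b}"] by auto
qed

lemma nbr_unique:
  assumes tree: "is_tree Vin E" and W: "W \<subseteq> Vin" and w: "w \<in> W"
    and e: "e \<in> W - {w}" "e' \<in> W - {w}" "(w, e) \<in> E" "(w, e') \<in> E"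
    and r: "rch E (W - {w}) e e'"
  shows "e = e'"
proof (rule ccontr)
  assume ne: "e \<noteq> e'"
  have symE: "sym E" using tree by (simp add: is_tree_def)
  have "is_path W E [e, w, e'] e e'" using e w ne symE by (auto simp: is_path_def sym_def)
  from acyclic_path[OF tree W this] r e show False by auto
qed

lemma nbr_exists:
  assumes conn: "connected_in E W" and w: "w \<in> W" and x: "x \<in> W - {w}"
  shows "\<exists>e. e \<in> W - {w} \<and> (w, e) \<in> E \<and> rch E (W - {w}) e x"
proof -
  obtain p where p: "is_path W E p w x"
    using path_exists[where E=E and W=W and a=w and b=x] conn w x by (auto simp: connected_in_def)
  obtain q where q: "p = w # q" using p by (cases p) (auto simp: is_path_def)
  have qne: "q \<noteq> []" using p q x by (auto simp: is_path_def)
  have "set q \<subseteq> W - {w}" using p q by (auto simp: is_path_def)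
  moreover have "successively (\<lambda>x y. (x, y) \<in> E) q" "(w, hd q) \<in> E" using p q qne
    by (auto simp: is_path_def successively_Cons)
  moreover have "last q = x" using p q qne by (auto simp: is_path_def)
  moreover have "hd q \<in> set q" using qne by simp
  ultimately show ?thesis using walk_rch[of E q "W - {w}"] qne
    by (intro exI[of _ "hd q"]) blast
qed

lemma path_through:
  assumes tree: "is_tree Vin E" and W: "W \<subseteq> Vin"
    and p: "is_path W E p x y" and w: "w \<in> set p" "w \<noteq> x"
    and e: "e \<in> W - {w}" "(w, e) \<in> E" and r: "rch E (W - {w}) e x"
  shows "e \<in> set p"
proof -
  obtain xs ys where p_eq: "p = xs @ w # ys" using w(1) by (meson split_list)
  have xs: "xs \<noteq> []" using p p_eq w(2) by (auto simp: is_path_def)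
  have dist: "distinct p" "set p \<subseteq> W" using p by (auto simp: is_path_def)
  have xsW: "set xs \<subseteq> W - {w}" using dist p_eq by auto
  have succ: "successively (\<lambda>x y. (x, y) \<in> E) xs" "(last xs, w) \<in> E"
    using p p_eq xs by (auto simp: is_path_def successively_append_iff)
  have "hd xs = x" using p p_eq xs by (auto simp: is_path_def)
  then have "rch E (W - {w}) x (last xs)" using walk_rch[OF succ(1) xs xsW] by simp
  then have "rch E (W - {w}) e (last xs)" using r by (meson rtrancl_trans)
  moreover have "last xs \<in> W - {w}" using xs xsW last_in_set by blast
  moreover have "(w, last xs) \<in> E" using succ(2) tree by (auto simp: is_tree_def sym_def)
  moreover have "w \<in> W" using dist w by auto
  ultimately have "e = last xs" using nbr_unique[OF tree W] e by blast
  then show ?thesis using xs p_eq by auto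
qed

lemma sep_path:
  assumes conn: "connected_in E W" and a: "a \<in> W" "b \<in> W"
    and n: "\<not> rch E (W - {x}) a b"
  shows "\<exists>p. is_path W E p a b \<and> x \<in> set p"
proof -
  obtain p where p: "is_path W E p a b"
    using path_exists[where E=E and W=W and a=a and b=b] conn a by (auto simp: connected_in_def)
  have "x \<in> set p"
  proof (rule ccontr)
    assume "x \<notin> set p"
    then have "set p \<subseteq> W - {x}" using p by (auto simp: is_path_def)
    then show False using path_rch[OF p] n by blast
  qed
  then show ?thesis using p by blast
qed



locale setting =
  fixes Vin :: "'v set" and Ein :: "('v \<times> 'v) set"
    and f :: "'v set \<Rightarrow> 'v \<Rightarrow> ennreal" and \<T> :: real
    and V S :: "'v set" and r :: 'v
  assumes tree: "is_tree Vin Ein"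
    and mm: "minmax_monotone Vin Ein f"
    and T_nonneg: "\<T> \<ge> 0"
    and sub: "is_subtree Vin Ein V"
    and leaves: "\<forall>s\<in>S. is_leaf Ein V s"
    and root: "valid_root Ein V S r"
begin

abbreviation "D w \<equiv> desc Ein V r w"
abbreviation "cmp w x \<equiv> comp_of Ein (V - {w}) x"
abbreviation "H \<equiv> hub Ein V S"
abbreviation "R w a b \<equiv> rch Ein (V - {w}) a b"
abbreviation "ss X \<equiv> self_sufficient Vin Ein f \<T> S X"

lemma VVin: "V \<subseteq> Vin" using sub by (simp add: is_subtree_def)
lemma conn: "connected_in Ein V" using sub by (simp add: is_subtree_def)
lemma symE: "sym Ein" using tree by (simp add: is_tree_def)
lemma irr: "(x, x) \<notin> Ein" using tree by (simp add: is_tree_def)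
lemma finV: "finite V" using tree VVin finite_subset by (auto simp: is_tree_def)
lemma SV: "S \<subseteq> V" using leaves by (auto simp: is_leaf_def)
lemma HV: "H \<subseteq> V" by (auto simp: hub_def is_path_def)
lemma rH: "r \<in> H" and rS: "r \<notin> S" using root by (auto simp: valid_root_def)
lemma rV: "r \<in> V" using rH HV by auto

lemma Rsym: "R w a b \<Longrightarrow> R w b a" using rch_sym[OF symE] by blast
lemma Rtrans: "R w a b \<Longrightarrow> R w b c \<Longrightarrow> R w a c" by (meson rtrancl_trans)
lemma Rrefl: "R w a a" by simp

lemma cmp_iff: "x \<in> cmp w a \<longleftrightarrow> x \<in> V - {w} \<and> R w a x"
  by (simp add: comp_of_def)

lemma desc_char:
  assumes w: "w \<in> V"
  shows "D w = {x \<in> V. x = w \<or> w = r \<or> \<not> R w r x}"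
proof (intro set_eqI iffI)
  fix x assume "x \<in> D w"
  then obtain p where p: "x \<in> V" "is_path V Ein p r x" "w \<in> set p" by (auto simp: desc_def)
  show "x \<in> {x \<in> V. x = w \<or> w = r \<or> \<not> R w r x}"
    using acyclic_path[OF tree VVin p(2) p(3)] p(1) by auto
next
  fix x assume x: "x \<in> {x \<in> V. x = w \<or> w = r \<or> \<not> R w r x}"
  then have xV: "x \<in> V" by simp
  obtain p where p: "is_path V Ein p r x"
    using path_exists[where E=Ein and W=V and a=r and b=x] conn rV xV
    by (auto simp: connected_in_def)
  show "x \<in> D w"
  proof (cases "x = w \<or> w = r")
    case True
    then have "w \<in> set p" using p by (auto simp: is_path_def)
    then show ?thesis using p xV by (auto simp: desc_def)
  next
    case False
    then have "\<not> R w r x" using x by auto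
    from sep_path[OF conn rV xV this] show ?thesis using xV by (auto simp: desc_def)
  qed
qed

lemma D_r: "D r = V" using desc_char[OF rV] by auto

lemma D_mem: "w \<in> V \<Longrightarrow> x \<in> D w \<longleftrightarrow> x \<in> V \<and> (x = w \<or> w = r \<or> \<not> R w r x)"
  using desc_char by blast

lemma sink_desc:
  assumes s: "s \<in> S" shows "D s = {s}"
proof -
  have sV: "s \<in> V" using s SV by auto
  have sr: "s \<noteq> r" using s rS by auto
  have "x = s" if x: "x \<in> V" "\<not> R s r x" for x
  proof (rule ccontr)
    assume xs: "x \<noteq> s"
    obtain e where e: "e \<in> V - {s}" "(s, e) \<in> Ein" "R s e x"
      using nbr_exists[OF conn sV] x xs by blast
    obtain e' where e': "e' \<in> V - {s}" "(s, e') \<in> Ein" "R s e' r"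
      using nbr_exists[OF conn sV] rV sr by blast
    have "card {w \<in> V. (s, w) \<in> Ein} = 1" using leaves s by (auto simp: is_leaf_def)
    then obtain z where "{w \<in> V. (s, w) \<in> Ein} = {z}" by (meson card_1_singletonE)
    moreover have "e \<in> {w \<in> V. (s, w) \<in> Ein}" "e' \<in> {w \<in> V. (s, w) \<in> Ein}" using e e' by auto
    ultimately have "e = e'" by auto
    then have "R s r x" using e e' Rsym Rtrans by blast
    then show False using x by simp
  qed
  then show ?thesis using desc_char[OF sV] sV sr by auto
qed

lemma hub_sep:
  assumes w: "w \<in> H" "w \<notin> S"
  shows "\<exists>s\<in>S. \<exists>s'\<in>S. s \<noteq> w \<and> s' \<noteq> w \<and> \<not> R w s s'"
proof -
  obtain s s' p where sp: "s \<in> S" "s' \<in> S" "is_path V Ein p s s'" "w \<in> set p"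
    using w(1) by (auto simp: hub_def)
  have "s \<noteq> w" "s' \<noteq> w" using sp w(2) by auto
  then show ?thesis using acyclic_path[OF tree VVin sp(3) sp(4)] sp by blast
qed


definition "C w = {u \<in> H. u \<in> V \<and> (u, w) \<in> Ein \<and> u \<in> D w}"

lemma parent_iff: "is_parent Ein V r u w \<longleftrightarrow> u \<in> V \<and> w \<in> V \<and> (u, w) \<in> Ein \<and> u \<in> D w"
  by (simp add: is_parent_def)

lemma C_basic:
  assumes w: "w \<in> V" and u: "u \<in> C w"
  shows "u \<in> V - {w}" "(w, u) \<in> Ein" "u \<noteq> r" "u \<in> H"
    "w = r \<or> \<not> R w r u"
proof -
  have u1: "u \<in> H" "u \<in> V" "(u, w) \<in> Ein" "u \<in> D w" using u by (auto simp: C_def)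
  show "u \<in> V - {w}" using u1 irr by auto
  show "(w, u) \<in> Ein" using u1 symE by (auto simp: sym_def)
  show "u \<in> H" by fact
  show wr: "w = r \<or> \<not> R w r u" using u1 D_mem[OF w] irr by auto
  show "u \<noteq> r"
  proof
    assume ur: "u = r"
    show False
    proof (cases "w = r")
      case True then show False using ur u1(3) irr by simp
    next
      case False then have "\<not> R w r u" using wr by simp
      then show False using ur by simp
    qed
  qed
qed

lemma child_comp:
  assumes w: "w \<in> V" and u: "u \<in> C w"
  shows "cmp w u = D u"
proof -
  note cb = C_basic[OF w u]
  have uV: "u \<in> V" using cb by auto
  have Rurw: "R u r w"
  proof (cases "w = r")
    case True then show ?thesis by simp
  next
    case False
    obtain p where p: "is_path V Ein p r w"
      using path_exists[where E=Ein and W=V and a=r and b=w] conn rV w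
      by (auto simp: connected_in_def)
    have "u \<notin> set p"
    proof
      assume "u \<in> set p"
      from seg_prefix[OF p this] cb have "R w r u" by auto
      then show False using cb False by auto
    qed
    then have "set p \<subseteq> V - {u}" using p by (auto simp: is_path_def)
    then show ?thesis using path_rch[OF p] by blast
  qed
  show ?thesis
  proof (intro set_eqI iffI)
    fix x assume x: "x \<in> D u"
    have xV: "x \<in> V" and xc: "x = u \<or> \<not> R u r x" using x D_mem[OF uV] cb by auto
    show "x \<in> cmp w u"
    proof (cases "x = u")
      case True then show ?thesis using cb by (auto simp: cmp_iff)
    next
      case False
      then have nR: "\<not> R u r x" using xc by auto
      have nRw: "\<not> R u w x" using nR Rurw Rtrans by blast
      have xw: "x \<noteq> w" using nRw w cb by auto
      obtain p where p: "is_path V Ein p w x" "u \<in> set p" using sep_path[OF conn w xV nRw] by blast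
      have "R w u x" using seg_suffix[OF p] cb by auto
      then show ?thesis using xV xw by (auto simp: cmp_iff)
    qed
  next
    fix x assume x: "x \<in> cmp w u"
    then have xV: "x \<in> V - {w}" and Rx: "R w u x" by (auto simp: cmp_iff)
    show "x \<in> D u"
    proof (cases "x = u")
      case True then show ?thesis using D_mem[OF uV] uV by auto
    next
      case False
      have "\<not> R u r x"
      proof
        assume "R u r x"
        then have Rwx: "R u w x" using Rurw Rsym Rtrans by blast
        have uW: "u \<in> V - {w}" using cb by auto
        obtain q where q: "is_path (V - {w}) Ein q u x" using path_exists[where W="V - {w}"] Rx uW
          by blast
        have "is_path V Ein (w # q) w x" using q cb w by (auto simp: is_path_def successively_Cons)
        from acyclic_path[OF tree VVin this, of u] q False cb Rwx show False
          by (auto simp: is_path_def)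
      qed
      then show ?thesis using D_mem[OF uV] xV by auto
    qed
  qed
qed

lemma child_sub:
  assumes w: "w \<in> V" and u: "u \<in> C w"
  shows "cmp w u \<subseteq> D w - {w}"
proof
  fix x assume x: "x \<in> cmp w u"
  note cb = C_basic[OF w u]
  have "x \<in> V - {w}" "R w u x" using x by (auto simp: cmp_iff)
  moreover have "w = r \<or> \<not> R w r x" using cb(5) Rtrans \<open>R w u x\<close> Rsym by blast
  ultimately show "x \<in> D w - {w}" using D_mem[OF w] by auto
qed

lemma child_exists:
  assumes w: "w \<in> H" "w \<notin> S"
  shows "C w \<noteq> {}"
proof -
  have wV: "w \<in> V" using w HV by auto
  obtain s s' where ss: "s \<in> S" "s' \<in> S" "s \<noteq> w" "s' \<noteq> w" "\<not> R w s s'"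
    using hub_sep[OF w] by blast
  obtain s0 s1 where s01: "s0 \<in> S" "s1 \<in> S" "s0 \<noteq> w" "s1 \<noteq> w" "\<not> R w s0 s1"
    "w = r \<or> \<not> R w r s0"
  proof (cases "w = r \<or> \<not> R w r s")
    case True then show ?thesis using that ss by blast
  next
    case False
    then have "\<not> R w r s'" using ss Rsym Rtrans by blast
    moreover have "\<not> R w s' s" using ss Rsym by blast
    ultimately show ?thesis using that ss by blast
  qed
  have s0V: "s0 \<in> V" "s1 \<in> V" using s01 SV by auto
  obtain a where a: "a \<in> V - {w}" "(w, a) \<in> Ein" "R w a s0"
    using nbr_exists[OF conn wV] s0V s01 by blast
  have aD: "a \<in> D w" using D_mem[OF wV] a s01(6) Rtrans by blast
  obtain p where p: "is_path V Ein p s0 s1" "w \<in> set p" using sep_path[OF conn s0V s01(5)] by blast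
  have "a \<in> set p" using path_through[OF tree VVin p(1) p(2) _ a(1,2)] a(3) s01(3) Rsym by blast
  then have "a \<in> H" using p s01 by (auto simp: hub_def)
  moreover have "(a, w) \<in> Ein" using a symE by (auto simp: sym_def)
  ultimately have "a \<in> C w" using a aD by (auto simp: C_def)
  then show ?thesis by blast
qed

lemma BP_sub:
  assumes w: "w \<in> H" "w \<notin> S"
  shows "BP Ein V S w \<subseteq> D w"
proof
  have wV: "w \<in> V" using w HV by auto
  fix x assume x: "x \<in> BP Ein V S w"
  show "x \<in> D w"
  proof (cases "x = w \<or> w = r")
    case True then show ?thesis using D_mem[OF wV] wV x by (auto simp: BP_def comp_of_def)
  next
    case False
    then obtain \<eta> where eta: "\<eta> \<in> V" "(w, \<eta>) \<in> Ein" "\<eta> \<notin> H" "x \<in> cmp w \<eta>"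
      using x by (auto simp: BP_def)
    have xV: "x \<in> V - {w}" "R w \<eta> x" using eta by (auto simp: cmp_iff)
    have etaW: "\<eta> \<in> V - {w}" using eta irr by auto
    have "\<not> R w r x"
    proof
      assume Rrx: "R w r x"
      then have Retar: "R w \<eta> r" using xV Rsym Rtrans by blast
      obtain t1 t2 where t: "t1 \<in> S" "t2 \<in> S" "t1 \<noteq> r" "t2 \<noteq> r" "\<not> R r t1 t2"
        using hub_sep[OF rH rS] by blast
      have tV: "t1 \<in> V" "t2 \<in> V" using t SV by auto
      have "R w r t1 \<or> R w r t2"
      proof (rule ccontr)
        assume nn: "\<not> (R w r t1 \<or> R w r t2)"
        have wr: "w \<noteq> r" using False by auto
        obtain p1 where p1: "is_path V Ein p1 r t1" "w \<in> set p1"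
          using sep_path[OF conn rV tV(1)] nn by blast
        obtain p2 where p2: "is_path V Ein p2 r t2" "w \<in> set p2"
          using sep_path[OF conn rV tV(2)] nn by blast
        have "R r w t1" "R r w t2" using seg_suffix[OF p1(1) p1(2)] seg_suffix[OF p2(1) p2(2)] wr
          by auto
        then show False using t Rsym Rtrans by blast
      qed
      then obtain t where tt: "t \<in> S" "R w r t" using t by blast
      have Reta_t: "R w \<eta> t" using Retar tt Rtrans by blast
      obtain s s' where ss: "s \<in> S" "s' \<in> S" "s \<noteq> w" "s' \<noteq> w" "\<not> R w s s'"
        using hub_sep[OF w] by blast
      have "\<not> R w t s \<or> \<not> R w t s'"
      proof (rule ccontr)
        assume "\<not> (\<not> R w t s \<or> \<not> R w t s')"
        then have h: "R w t s" "R w t s'" by auto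
        have "R w s t" using Rsym[OF h(1)] .
        from Rtrans[OF this h(2)] ss(5) show False by simp
      qed
      then obtain s0 where s0: "s0 \<in> S" "\<not> R w t s0"
        using ss(1,2) by blast
      have tV': "t \<in> V" "s0 \<in> V" using tt s0 SV by auto
      obtain p where p: "is_path V Ein p t s0" "w \<in> set p" using sep_path[OF conn tV' s0(2)] by blast
      have "t \<noteq> w" using tt w by auto
      then have "\<eta> \<in> set p" using path_through[OF tree VVin p(1) p(2) _ etaW eta(2)] Reta_t by blast
      then have "\<eta> \<in> H" using p tt s0 by (auto simp: hub_def)
      then show False using eta by simp
    qed
    then show ?thesis using D_mem[OF wV] xV by auto
  qed
qed

lemma decomp:
  assumes w: "w \<in> H" "w \<notin> S"
  shows "D w = BP Ein V S w \<union> \<Union> (cmp w ` C w)"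
proof -
  have wV: "w \<in> V" using w HV by auto
  have "D w \<subseteq> BP Ein V S w \<union> \<Union> (cmp w ` C w)"
  proof
    fix x assume x: "x \<in> D w"
    show "x \<in> BP Ein V S w \<union> \<Union> (cmp w ` C w)"
    proof (cases "x = w")
      case True then show ?thesis by (auto simp: BP_def)
    next
      case False
      then have xV: "x \<in> V - {w}" "w = r \<or> \<not> R w r x" using x D_mem[OF wV] by auto
      obtain e where e: "e \<in> V - {w}" "(w, e) \<in> Ein" "R w e x" using nbr_exists[OF conn wV xV(1)] by blast
      have eD: "e \<in> D w" using D_mem[OF wV] e xV(2) Rtrans by blast
      have xe: "x \<in> cmp w e" using xV e by (auto simp: cmp_iff)
      show ?thesis
      proof (cases "e \<in> H")
        case True
        then have "e \<in> C w" using e eD symE by (auto simp: C_def sym_def)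
        then show ?thesis using xe by blast
      next
        case False
        then show ?thesis using xe e by (auto simp: BP_def)
      qed
    qed
  qed
  moreover have "BP Ein V S w \<union> \<Union> (cmp w ` C w) \<subseteq> D w"
    using BP_sub[OF w] child_sub[OF wV] by blast
  ultimately show ?thesis by blast
qed

lemma disj_children:
  assumes w: "w \<in> V" and u: "u \<in> C w" "u' \<in> C w" "u \<noteq> u'"
  shows "cmp w u \<inter> cmp w u' = {}"
proof (rule ccontr)
  assume "cmp w u \<inter> cmp w u' \<noteq> {}"
  then obtain x where "R w u x" "R w u' x" by (auto simp: cmp_iff)
  then have "R w u u'" using Rsym Rtrans by blast
  then show False using nbr_unique[OF tree VVin w] C_basic[OF w u(1)] C_basic[OF w u(2)] u(3) by blast
qed

lemma disj_BP:
  assumes w: "w \<in> V" and u: "u \<in> C w"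
  shows "BP Ein V S w \<inter> cmp w u = {}"
proof (rule ccontr)
  assume "BP Ein V S w \<inter> cmp w u \<noteq> {}"
  then obtain x where x: "x \<in> BP Ein V S w" "x \<in> cmp w u" by blast
  have "x \<noteq> w" using x(2) by (auto simp: cmp_iff)
  then obtain \<eta> where eta: "\<eta> \<in> V" "(w, \<eta>) \<in> Ein" "\<eta> \<notin> H" "x \<in> cmp w \<eta>"
    using x(1) by (auto simp: BP_def)
  have h1: "R w \<eta> x" "R w u x" using eta(4) x(2) by (auto simp: cmp_iff)
  have "R w \<eta> u" using Rtrans[OF h1(1) Rsym[OF h1(2)]] .
  moreover have "\<eta> \<in> V - {w}" using eta irr by auto
  ultimately have "\<eta> = u" using nbr_unique[OF tree VVin w] C_basic[OF w u] eta(2) by blast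
  then show False using eta C_basic[OF w u] by simp
qed

end


lemma ss_union:
  assumes ssP: "\<forall>P\<in>\<P>. self_sufficient Vin Ein f T S P"
    and dj: "\<forall>P\<in>\<P>. \<forall>P'\<in>\<P>. P \<noteq> P' \<longrightarrow> P \<inter> P' = {}"
  shows "self_sufficient Vin Ein f T S (\<Union>\<P>)"
proof -
  let ?prop = "\<lambda>P Q. (\<forall>s\<in>S \<inter> P. is_subtree Vin Ein (Q s) \<and> s \<in> Q s \<and> f (Q s) s \<le> ennreal T)
      \<and> (\<Union>s\<in>S \<inter> P. Q s) = P
      \<and> (\<forall>s\<in>S \<inter> P. \<forall>s'\<in>S \<inter> P. s \<noteq> s' \<longrightarrow> Q s \<inter> Q s' = {})"
  have "\<forall>P\<in>\<P>. \<exists>Q. ?prop P Q" using ssP by (simp add: self_sufficient_def)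
  then obtain QQ where QQ: "\<forall>P\<in>\<P>. ?prop P (QQ P)" by metis
  define pc where "pc s = (THE P. P \<in> \<P> \<and> s \<in> P)" for s
  have pcu: "pc s = P" if "P \<in> \<P>" "s \<in> P" for P s
    unfolding pc_def using that dj by (intro the_equality) auto
  define Q where "Q s = QQ (pc s) s" for s
  have QP: "Q s = QQ P s" if "P \<in> \<P>" "s \<in> P" for P s using pcu[OF that] Q_def by simp
  have Qsub: "Q s \<subseteq> P" if "P \<in> \<P>" "s \<in> P" "s \<in> S" for P s
    using QP[OF that(1,2)] QQ that by blast
  show ?thesis unfolding self_sufficient_def
  proof (intro exI[of _ Q] conjI ballI impI)
    fix s assume s: "s \<in> S \<inter> \<Union>\<P>"
    then obtain P where P: "P \<in> \<P>" "s \<in> P" by blast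
    show "is_subtree Vin Ein (Q s)" "s \<in> Q s" "f (Q s) s \<le> ennreal T"
      using QQ P s QP[OF P] by auto
  next
    show "(\<Union>s\<in>S \<inter> \<Union>\<P>. Q s) = \<Union>\<P>"
    proof (intro equalityI subsetI)
      fix x assume "x \<in> (\<Union>s\<in>S \<inter> \<Union>\<P>. Q s)"
      then obtain s P where "s \<in> S" "P \<in> \<P>" "s \<in> P" "x \<in> Q s" by blast
      then show "x \<in> \<Union>\<P>" using Qsub by blast
    next
      fix x assume "x \<in> \<Union>\<P>"
      then obtain P where P: "P \<in> \<P>" "x \<in> P" by blast
      then have "x \<in> (\<Union>s\<in>S \<inter> P. QQ P s)" using QQ by blast
      then obtain s where "s \<in> S \<inter> P" "x \<in> QQ P s" by blast
      then show "x \<in> (\<Union>s\<in>S \<inter> \<Union>\<P>. Q s)" using QP[OF P(1)] P by blast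
    qed
  next
    fix s s' assume s: "s \<in> S \<inter> \<Union>\<P>" "s' \<in> S \<inter> \<Union>\<P>" "s \<noteq> s'"
    then obtain P P' where P: "P \<in> \<P>" "s \<in> P" "P' \<in> \<P>" "s' \<in> P'" by blast
    show "Q s \<inter> Q s' = {}"
    proof (cases "P = P'")
      case True
      then show ?thesis using QQ P s QP[OF P(1,2)] QP[OF P(3,4)] by auto
    next
      case False
      then have "P \<inter> P' = {}" using dj P by blast
      moreover have "Q s \<subseteq> P" "Q s' \<subseteq> P'" using Qsub P s by auto
      ultimately show ?thesis by blast
    qed
  qed
qed

context setting begin

lemma ss_sink:
  assumes s: "s \<in> S" shows "ss {s}"
proof -
  have sVin: "s \<in> Vin" using s SV VVin by auto
  have "f {s} s = 0" using mm sVin by (simp add: minmax_monotone_def)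
  moreover have "is_subtree Vin Ein {s}" using sVin by (auto simp: is_subtree_def connected_in_def)
  ultimately show ?thesis unfolding self_sufficient_def using s T_nonneg
    by (intro exI[of _ "\<lambda>_. {s}"]) auto
qed

lemma main_ind:
  assumes noRC: "\<not> (\<exists>u v. reaching_criterion Vin Ein f \<T> V S r u v)"
  shows "w \<in> H \<Longrightarrow> ss (D w)"
proof (induction w rule: measure_induct_rule[of "\<lambda>w. card (D w)"])
  case (less w)
  show ?case
  proof (cases "w \<in> S")
    case True
    then show ?thesis using sink_desc ss_sink by simp
  next
    case False
    have wV: "w \<in> V" using less.prems HV by auto
    obtain u0 where u0: "u0 \<in> C w" using child_exists[OF less.prems False] by blast
    have ssc: "ss (cmp w u)" if u: "u \<in> C w" for u
    proof -
      have "D u \<subseteq> D w - {w}" using child_sub[OF wV u] child_comp[OF wV u] by simp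
      moreover have "w \<in> D w" using D_mem[OF wV] wV by simp
      moreover have "finite (D w)" using finV by (auto simp: desc_def)
      moreover have "D u \<subset> D w" using calculation(1,2) by blast
      ultimately have "card (D u) < card (D w)" using psubset_card_mono by blast
      then have "ss (D u)" using less.IH C_basic[OF wV u] by blast
      then show ?thesis using child_comp[OF wV u] by simp
    qed
    have ssBP: "ss (BP Ein V S w \<union> cmp w u0)"
    proof (rule ccontr)
      assume "\<not> ?thesis"
      moreover have "is_parent Ein V r u0 w" using u0 wV by (auto simp: C_def is_parent_def)
      ultimately have "reaching_criterion Vin Ein f \<T> V S r u0 w"
        using ssc[OF u0] C_basic[OF wV u0] less.prems by (auto simp: reaching_criterion_def)
      then show False using noRC by blast
    qed
    define \<P> where "\<P> = insert (BP Ein V S w \<union> cmp w u0) (cmp w ` (C w - {u0}))"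
    have "\<Union>\<P> = D w" unfolding \<P>_def using decomp[OF less.prems False] u0 by blast
    moreover have "\<forall>P\<in>\<P>. ss P" unfolding \<P>_def using ssBP ssc by blast
    moreover have "\<forall>P\<in>\<P>. \<forall>P'\<in>\<P>. P \<noteq> P' \<longrightarrow> P \<inter> P' = {}"
    proof (intro ballI impI)
      fix P P' assume P: "P \<in> \<P>" "P' \<in> \<P>" "P \<noteq> P'"
      have A: "(BP Ein V S w \<union> cmp w u0) \<inter> cmp w u = {}" if "u \<in> C w - {u0}" for u
        using disj_BP[OF wV] disj_children[OF wV u0] that by blast
      have B: "cmp w u \<inter> cmp w u' = {}" if "u \<in> C w" "u' \<in> C w" "cmp w u \<noteq> cmp w u'" for u u'
        using disj_children[OF wV that(1,2)] that(3) by blast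
      show "P \<inter> P' = {}" using P A B unfolding \<P>_def by blast
    qed
    ultimately show ?thesis using ss_union by metis
  qed
qed

end

theorem corollary3:
  fixes Vin :: "'v set" and Ein :: "('v \<times> 'v) set"
    and f :: "'v set \<Rightarrow> 'v \<Rightarrow> ennreal" and \<T> :: real
    and V S :: "'v set" and r :: 'v
  assumes tree: "is_tree Vin Ein"
    and mm: "minmax_monotone Vin Ein f"
    and T_nonneg: "\<T> \<ge> 0"
    and sub: "is_subtree Vin Ein V"
    and leaves: "\<forall>s\<in>S. is_leaf Ein V s"
    and S2: "card S \<ge> 2"
    and V3: "card V > 2"
    and root: "valid_root Ein V S r"
    and viable: "RC_viable Ein f \<T> V S"
  shows "(\<exists>u v. reaching_criterion Vin Ein f \<T> V S r u v)
       \<or> (rec_self_sufficient Vin Ein f \<T> V S r r \<and> self_sufficient Vin Ein f \<T> S V)"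
proof -
  interpret setting Vin Ein f \<T> V S r using assms by (unfold_locales) auto
  show ?thesis
  proof (cases "\<exists>u v. reaching_criterion Vin Ein f \<T> V S r u v")
    case True then show ?thesis by blast
  next
    case False
    have "rec_self_sufficient Vin Ein f \<T> V S r r"
      using main_ind[OF False] by (auto simp: rec_self_sufficient_def)
    moreover have "self_sufficient Vin Ein f \<T> S V" using main_ind[OF False rH] D_r by simp
    ultimately show ?thesis by blast
  qed
qed

end
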